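(* For any election $(V,C,\sigma)$ and candidate $a\in C$, if the integral domination graph $G(a)$ admits a perfect matching, then $\mathrm{plu}(a)\ge\mathrm{veto}(a)$.
   Context: An election: finite nonempty voter set $V$, finite candidate set $C$, a profile of linear orders $\sigma_i$ over $C$; $a\succeq_i c$ means $a=c$ or $i$ ranks $a$ above $c$; $\mathrm{top}(i)$ is $i$'s first choice. $\mathrm{plu}(a)$ is the number of voters ranking $a$ first and $\mathrm{veto}(a)$ the number of voters ranking $a$ last. The integral domination graph $G(a)$ is the bipartite graph with both sides copies of $V$ and edge $(i,j)$ iff $a\succeq_i\mathrm{top}(j)$. *)

theory Defs
  imports Main
begin

text \<open>An election: finite nonempty voter set V, finite candidate set C, and a profile
  assigning to each voter a linear order over C, represented as a list of all candidates
  without repetition (first element = most preferred).\<close>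

definition election :: "'v set \<Rightarrow> 'c set \<Rightarrow> ('v \<Rightarrow> 'c list) \<Rightarrow> bool" where
  "election V C \<sigma> \<longleftrightarrow> finite V \<and> V \<noteq> {} \<and> finite C \<and>
     (\<forall>i\<in>V. distinct (\<sigma> i) \<and> set (\<sigma> i) = C)"

definition weakly_prefers :: "('v \<Rightarrow> 'c list) \<Rightarrow> 'v \<Rightarrow> 'c \<Rightarrow> 'c \<Rightarrow> bool" where
  "weakly_prefers \<sigma> i a c \<longleftrightarrow> a = c \<or>
     (\<exists>p q. p < q \<and> q < length (\<sigma> i) \<and> \<sigma> i ! p = a \<and> \<sigma> i ! q = c)"

definition top :: "('v \<Rightarrow> 'c list) \<Rightarrow> 'v \<Rightarrow> 'c" where
  "top \<sigma> i = hd (\<sigma> i)"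

definition plu :: "'v set \<Rightarrow> ('v \<Rightarrow> 'c list) \<Rightarrow> 'c \<Rightarrow> nat" where
  "plu V \<sigma> a = card {i\<in>V. top \<sigma> i = a}"

definition veto :: "'v set \<Rightarrow> ('v \<Rightarrow> 'c list) \<Rightarrow> 'c \<Rightarrow> nat" where
  "veto V \<sigma> a = card {i\<in>V. last (\<sigma> i) = a}"

text \<open>Integral domination graph G(a): bipartite, both sides copies of V; edge (i,j)
  (i on the left, j on the right) iff a \<succeq>_i top(j).\<close>
definition dom_graph :: "'v set \<Rightarrow> ('v \<Rightarrow> 'c list) \<Rightarrow> 'c \<Rightarrow> ('v \<times> 'v) set" where
  "dom_graph V \<sigma> a = {(i, j). i \<in> V \<and> j \<in> V \<and> weakly_prefers \<sigma> i a (top \<sigma> j)}"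

definition has_perfect_matching :: "'v set \<Rightarrow> ('v \<times> 'v) set \<Rightarrow> bool" where
  "has_perfect_matching V E \<longleftrightarrow> (\<exists>\<pi>. bij_betw \<pi> V V \<and> (\<forall>i\<in>V. (i, \<pi> i) \<in> E))"

end

theory Submission
  imports Defs
begin

lemma last_wp:
  assumes "distinct xs" "xs \<noteq> []" "p < q" "q < length xs" "xs ! p = last xs"
  shows False
proof -
  have "last xs = xs ! (length xs - 1)" using assms(2) by (simp add: last_conv_nth)
  then have "p = length xs - 1" using assms by (simp add: nth_eq_iff_index_eq)
  then show False using assms by simp
qed

theorem lemma6:
  fixes V :: "'v set" and C :: "'c set" and \<sigma> :: "'v \<Rightarrow> 'c list" and a :: 'c
  assumes "election V C \<sigma>"
    and "a \<in> C"
    and "has_perfect_matching V (dom_graph V \<sigma> a)"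
  shows "plu V \<sigma> a \<ge> veto V \<sigma> a"
proof -
  obtain \<pi> where bij: "bij_betw \<pi> V V" and e: "\<forall>i\<in>V. (i, \<pi> i) \<in> dom_graph V \<sigma> a"
    using assms(3) unfolding has_perfect_matching_def by blast
  have fin: "finite V" using assms(1) unfolding election_def by blast
  have "\<pi> ` {i\<in>V. last (\<sigma> i) = a} \<subseteq> {i\<in>V. top \<sigma> i = a}"
  proof
    fix j assume "j \<in> \<pi> ` {i\<in>V. last (\<sigma> i) = a}"
    then obtain i where i: "i \<in> V" "last (\<sigma> i) = a" "j = \<pi> i" by blast
    have jV: "j \<in> V" using bij i bij_betw_apply by fastforce
    have wp: "weakly_prefers \<sigma> i a (top \<sigma> j)" using e i unfolding dom_graph_def by auto
    have d: "distinct (\<sigma> i)" "set (\<sigma> i) = C" using assms(1) i(1) unfolding election_def by auto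
    have ne: "\<sigma> i \<noteq> []" using d(2) assms(2) by auto
    have "top \<sigma> j = a"
    proof (rule ccontr)
      assume "top \<sigma> j \<noteq> a"
      then obtain p q where pq: "p < q" "q < length (\<sigma> i)" "\<sigma> i ! p = a"
        using wp unfolding weakly_prefers_def by blast
      have "\<sigma> i ! p = last (\<sigma> i)" using pq(3) i(2) by simp
      then show False by (rule last_wp[OF d(1) ne pq(1) pq(2)])
    qed
    then show "j \<in> {i\<in>V. top \<sigma> i = a}" using jV by blast
  qed
  moreover have "inj_on \<pi> {i\<in>V. last (\<sigma> i) = a}"
    using bij_betw_imp_inj_on[OF bij] by (rule inj_on_subset) auto
  moreover have "finite {i\<in>V. top \<sigma> i = a}" using fin by simp
  ultimately have "card {i\<in>V. last (\<sigma> i) = a} \<le> card {i\<in>V. top \<sigma> i = a}"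
    using card_inj_on_le by blast
  then show ?thesis unfolding plu_def veto_def by simp
qed

end
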